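(* For every $d\ge1$ there exists a function $\eta\in\mathcal A_+(d)$ such that $\widehat\eta=\eta$, $\eta(0)<0$, and $|x|^{d+1}\eta(x)\ge 1$ for all sufficiently large $|x|$.
   Context: Fourier transform: $\widehat f(\xi)=\int_{\mathbb{R}^d} f(x)e^{-2\pi i\langle x,\xi\rangle}\,dx$. $\mathcal A_+(d)$ is the set of $f:\mathbb{R}^d\to\mathbb{R}$ with $f,\widehat f\in L^1(\mathbb{R}^d)$, $\widehat f$ real-valued, $f$ eventually nonnegative (i.e. $\ge 0$ for all sufficiently large $|x|$) with $\widehat f(0)\le0$, and $\widehat f$ eventually nonnegative with $f(0)\le0$. *)

theory Defs
  imports "HOL-Analysis.Analysis"
begin

definition fourier :: "('a::euclidean_space \<Rightarrow> real) \<Rightarrow> 'a \<Rightarrow> complex" where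
  "fourier f \<xi> = (\<integral>x. complex_of_real (f x) * cis (- 2 * pi * (x \<bullet> \<xi>)) \<partial>lborel)"

definition eventually_nonneg :: "('a::euclidean_space \<Rightarrow> real) \<Rightarrow> bool" where
  "eventually_nonneg g \<longleftrightarrow> (\<exists>R. \<forall>x. R \<le> norm x \<longrightarrow> 0 \<le> g x)"

text \<open>The class A_+(d), with d = DIM('a). Since hat f is required to be real-valued,
  we identify it with the real function Re (hat f).\<close>
definition A_plus :: "('a::euclidean_space \<Rightarrow> real) set" where
  "A_plus = {f. integrable lborel f
               \<and> (\<forall>\<xi>. Im (fourier f \<xi>) = 0)
               \<and> integrable lborel (\<lambda>\<xi>. Re (fourier f \<xi>))
               \<and> eventually_nonneg f \<and> Re (fourier f 0) \<le> 0
               \<and> eventually_nonneg (\<lambda>\<xi>. Re (fourier f \<xi>)) \<and> f 0 \<le> 0}"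

end

theory Submission
  imports Defs "HOL-Probability.Characteristic_Functions"
begin

lemma gauss_std:
  fixes \<theta> :: real
  shows "integrable lborel (\<lambda>x. complex_of_real (exp (- (x^2) / 2)) * cis(\<theta>*x))"
    and "(\<integral>x. complex_of_real (exp (- (x^2) / 2)) * cis(\<theta>*x) \<partial>lborel)
         = complex_of_real (sqrt(2*pi) * exp (- (\<theta>^2) / 2))"
proof -
  have eq: "\<And>x. complex_of_real (exp (- (x^2) / 2)) * cis(\<theta>*x)
      = complex_of_real (sqrt(2*pi)) * (std_normal_density x *\<^sub>R iexp (\<theta>*x))"
    by (simp add: std_normal_density_def cis_conv_exp scaleR_conv_of_real mult.commute)
  have m: "(\<lambda>x. std_normal_density x *\<^sub>R iexp (\<theta>*x)) \<in> borel_measurable lborel"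
    by measurable
  have i1: "integrable lborel (\<lambda>x. std_normal_density x *\<^sub>R iexp (\<theta>*x))"
    by (rule Bochner_Integration.integrable_bound[where f="std_normal_density", OF _ m])
       (auto simp: norm_exp_eq_Re)
  then show "integrable lborel (\<lambda>x. complex_of_real (exp (- (x^2) / 2)) * cis(\<theta>*x))"
    unfolding eq by (rule integrable_mult_right)
  have "char std_normal_distribution \<theta> = (\<integral>x. std_normal_density x *\<^sub>R iexp (\<theta>*x) \<partial>lborel)"
    unfolding char_def by (subst integral_density) auto
  then have "(\<integral>x. std_normal_density x *\<^sub>R iexp (\<theta>*x) \<partial>lborel) = complex_of_real (exp (- (\<theta>^2) / 2))"
    by (simp add: char_std_normal_distribution)
  then show "(\<integral>x. complex_of_real (exp (- (x^2) / 2)) * cis(\<theta>*x) \<partial>lborel)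
         = complex_of_real (sqrt(2*pi) * exp (- (\<theta>^2) / 2))"
    unfolding eq integral_mult_right_zero by simp
qed

lemma gauss1d:
  fixes s u :: real
  assumes s: "s > 0"
  shows "integrable lborel (\<lambda>y. complex_of_real (exp (- pi * y^2 / s^2)) * cis (-2*pi*y*u))"
    and "(\<integral>y. complex_of_real (exp (- pi * y^2 / s^2)) * cis (-2*pi*y*u) \<partial>lborel)
         = complex_of_real (s * exp (- pi * s^2 * u^2))"
proof -
  define c where "c = s / sqrt (2*pi)"
  define \<theta> where "\<theta> = -2*pi*c*u"
  define f where "f = (\<lambda>y. complex_of_real (exp (- pi * y^2 / s^2)) * cis (-2*pi*y*u))"
  have c0: "c \<noteq> 0" "c > 0" using s by (auto simp: c_def)
  have c2: "c^2 = s^2 / (2*pi)" by (simp add: c_def power_divide)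
  have fc: "f (0 + c*x) = complex_of_real (exp (- (x^2) / 2)) * cis(\<theta>*x)" for x
  proof -
    have "- pi * (c*x)^2 / s^2 = - (x^2) / 2"
      using s by (simp add: power_mult_distrib c2 field_simps)
    moreover have "-2*pi*(c*x)*u = \<theta>*x" by (simp add: \<theta>_def)
    ultimately show ?thesis by (simp add: f_def)
  qed
  have "integrable lborel f"
    using lborel_integrable_real_affine_iff[OF c0(1), of f 0] gauss_std(1)[of \<theta>]
    by (simp only: fc)
  then show "integrable lborel (\<lambda>y. complex_of_real (exp (- pi * y^2 / s^2)) * cis (-2*pi*y*u))"
    by (simp add: f_def)
  have "(\<integral>y. f y \<partial>lborel) = \<bar>c\<bar> *\<^sub>R (\<integral>x. f (0 + c*x) \<partial>lborel)"
    by (rule lborel_integral_real_affine[OF c0(1)])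
  also have "\<dots> = c *\<^sub>R complex_of_real (sqrt(2*pi) * exp (- (\<theta>^2) / 2))"
    using c0 by (simp only: fc gauss_std(2)) simp
  also have "\<dots> = complex_of_real (s * exp (- pi * s^2 * u^2))"
  proof -
    have "c * sqrt (2*pi) = s" using c0 by (simp add: c_def)
    moreover have "- (\<theta>^2) / 2 = - pi * s^2 * u^2"
    proof -
      have "\<theta>^2 = 4*(pi^2)*(c^2)*(u^2)" by (simp add: \<theta>_def power_mult_distrib)
      also have "\<dots> = 2*pi*(2*pi*c^2)*(u^2)" by (simp add: power2_eq_square)
      also have "2*pi*c^2 = s^2" using c2 by simp
      finally have "\<theta>^2 = 2*pi*(s^2)*(u^2)" by simp
      then show ?thesis by simp
    qed
    ultimately show ?thesis by (simp add: scaleR_conv_of_real mult.assoc[symmetric] flip: of_real_mult)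
  qed
  finally show "(\<integral>y. complex_of_real (exp (- pi * y^2 / s^2)) * cis (-2*pi*y*u) \<partial>lborel)
         = complex_of_real (s * exp (- pi * s^2 * u^2))" by (simp add: f_def)
qed

lemma exp_cis_prod:
  fixes a t :: "'i \<Rightarrow> real"
  assumes "finite I"
  shows "(\<Prod>b\<in>I. complex_of_real (exp (a b)) * cis (t b))
       = complex_of_real (exp (\<Sum>b\<in>I. a b)) * cis (\<Sum>b\<in>I. t b)"
  using assms
proof (induction I rule: finite_induct)
  case empty then show ?case by simp
next
  case (insert x F)
  then show ?case by (simp add: exp_add cis_mult[symmetric] mult_ac)
qed

lemma norm_sq_basis: "(norm (x::'a::euclidean_space))^2 = (\<Sum>b\<in>Basis. (x \<bullet> b)^2)"
  by (subst power2_norm_eq_inner, subst euclidean_inner) (simp add: power2_eq_square)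

lemma gauss_nd:
  fixes \<xi> :: "'a::euclidean_space" and s :: real
  assumes s: "s > 0"
  shows "integrable lborel (\<lambda>x::'a. complex_of_real (exp (- pi * (norm x)^2 / s^2)) * cis (-2*pi*(x \<bullet> \<xi>)))"
    and "(\<integral>x. complex_of_real (exp (- pi * (norm x)^2 / s^2)) * cis (-2*pi*(x \<bullet> \<xi>)) \<partial>lborel)
         = complex_of_real (s^DIM('a) * exp (- pi * s^2 * (norm \<xi>)^2))"
proof -
  interpret product_sigma_finite "\<lambda>_::'a. lborel :: real measure" by standard
  define h where "h = (\<lambda>b y. complex_of_real (exp (- pi * y^2 / s^2)) * cis (-2*pi*y*(\<xi> \<bullet> b)))"
  define F where "F = (\<lambda>x::'a. complex_of_real (exp (- pi * (norm x)^2 / s^2)) * cis (-2*pi*(x \<bullet> \<xi>)))"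
  have Fprod: "F x = (\<Prod>b\<in>Basis. h b (x \<bullet> b))" for x
  proof -
    have "(\<Prod>b\<in>Basis. h b (x \<bullet> b))
        = complex_of_real (exp (\<Sum>b\<in>Basis. - pi * (x \<bullet> b)^2 / s^2)) * cis (\<Sum>b\<in>Basis. -2*pi*(x \<bullet> b)*(\<xi> \<bullet> b))"
      unfolding h_def by (rule exp_cis_prod) simp
    also have "(\<Sum>b\<in>Basis. - pi * (x \<bullet> b)^2 / s^2) = - pi * (norm x)^2 / s^2"
      by (simp add: norm_sq_basis sum_negf sum_divide_distrib sum_distrib_left)
    also have "(\<Sum>b\<in>Basis. -2*pi*(x \<bullet> b)*(\<xi> \<bullet> b)) = -2*pi*(x \<bullet> \<xi>)"
      by (simp add: euclidean_inner[of x \<xi>] sum_distrib_left mult.assoc)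
    finally show ?thesis by (simp add: F_def)
  qed
  have hint: "integrable lborel (h b)" for b
    unfolding h_def by (rule gauss1d(1)[OF s])
  have hval: "integral\<^sup>L lborel (h b) = complex_of_real (s * exp (- pi * s^2 * (\<xi> \<bullet> b)^2))" for b
    unfolding h_def by (rule gauss1d(2)[OF s])
  have Fm: "F \<in> borel_measurable borel" unfolding F_def
    by (intro borel_measurable_continuous_onI continuous_intros) (use s in auto)
  have gm: "(\<lambda>f. \<Sum>b\<in>Basis. f b *\<^sub>R b) \<in> measurable (\<Pi>\<^sub>M b\<in>Basis. lborel) (borel :: 'a measure)"
    by measurable
  have comp: "F (\<Sum>b\<in>Basis. f b *\<^sub>R b) = (\<Prod>b\<in>Basis. h b (f b))" for f :: "'a \<Rightarrow> real"
    unfolding Fprod by (intro prod.cong refl) (simp add: inner_sum_left inner_Basis if_distrib cong: if_cong)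
  have "integrable (\<Pi>\<^sub>M b\<in>Basis. lborel) (\<lambda>f. \<Prod>b\<in>Basis. h b (f b))"
    by (rule product_integrable_prod) (auto intro: hint)
  then have "integrable lborel F"
    by (subst lborel_eq, subst integrable_distr_eq[OF gm Fm]) (simp add: comp)
  then show "integrable lborel (\<lambda>x::'a. complex_of_real (exp (- pi * (norm x)^2 / s^2)) * cis (-2*pi*(x \<bullet> \<xi>)))"
    by (simp add: F_def)
  have "integral\<^sup>L lborel F = (\<integral>f. (\<Prod>b\<in>Basis. h b (f b)) \<partial>(\<Pi>\<^sub>M b\<in>Basis. lborel))"
    by (subst lborel_eq, subst integral_distr[OF gm Fm]) (simp add: comp)
  also have "\<dots> = (\<Prod>b\<in>Basis. integral\<^sup>L lborel (h b))"
    by (rule product_integral_prod) (auto intro: hint)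
  also have "\<dots> = (\<Prod>b\<in>Basis. complex_of_real (s * exp (- pi * s^2 * (\<xi> \<bullet> b)^2)))"
    by (simp add: hval)
  also have "\<dots> = complex_of_real (s^DIM('a) * exp (- pi * s^2 * (norm \<xi>)^2))"
  proof -
    have "(\<Prod>b\<in>Basis. s * exp (- pi * s^2 * (\<xi> \<bullet> b)^2)) = s^DIM('a) * exp (\<Sum>b\<in>Basis. - pi * s^2 * (\<xi> \<bullet> b)^2)"
      by (simp add: prod.distrib exp_sum)
    also have "(\<Sum>b\<in>Basis. - pi * s^2 * (\<xi> \<bullet> b)^2) = - pi * s^2 * (norm \<xi>)^2"
      by (simp add: norm_sq_basis sum_distrib_left)
    finally have H: "(\<Prod>b\<in>Basis. s * exp (- pi * s^2 * (\<xi> \<bullet> b)^2)) = s^DIM('a) * exp (- pi * s^2 * (norm \<xi>)^2)" .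
    show ?thesis by (subst of_real_prod[symmetric], subst H) (rule refl)
  qed
  finally show "(\<integral>x. complex_of_real (exp (- pi * (norm x)^2 / s^2)) * cis (-2*pi*(x \<bullet> \<xi>)) \<partial>lborel)
         = complex_of_real (s^DIM('a) * exp (- pi * s^2 * (norm \<xi>)^2))" by (simp add: F_def)
qed

definition gs :: "real \<Rightarrow> 'a::euclidean_space \<Rightarrow> real" where
  "gs s x = exp (- pi * (norm x)^2 / s^2)"

definition Q :: "real \<Rightarrow> 'a::euclidean_space \<Rightarrow> real" where
  "Q s x = gs s x + s^DIM('a) * gs (1/s) x"

lemma cis_meas: "(\<lambda>x::'a::euclidean_space. cis (- 2 * pi * (x \<bullet> \<xi>))) \<in> borel_measurable borel"
  by (intro borel_measurable_continuous_onI continuous_intros)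

lemma fourier_integrable:
  fixes f :: "'a::euclidean_space \<Rightarrow> real"
  assumes f: "integrable lborel f"
  shows "integrable lborel (\<lambda>x. complex_of_real (f x) * cis (- 2 * pi * (x \<bullet> \<xi>)))"
proof (rule Bochner_Integration.integrable_bound[where f=f, OF f])
  have [measurable]: "f \<in> borel_measurable lborel" using f by auto
  have [measurable]: "(\<lambda>x::'a. cis (- 2 * pi * (x \<bullet> \<xi>))) \<in> borel_measurable lborel"
    using cis_meas by (simp add: measurable_lborel1)
  show "(\<lambda>x. complex_of_real (f x) * cis (- 2 * pi * (x \<bullet> \<xi>))) \<in> borel_measurable lborel"
    by measurable
  show "AE x in lborel. norm (complex_of_real (f x) * cis (- 2 * pi * (x \<bullet> \<xi>))) \<le> norm (f x)"
    by (simp add: norm_mult)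
qed

lemma fourier_lin:
  fixes f g :: "'a::euclidean_space \<Rightarrow> real"
  assumes f: "integrable lborel f" and g: "integrable lborel g"
  shows "fourier (\<lambda>x. a * f x + b * g x) \<xi> = a * fourier f \<xi> + b * fourier g \<xi>"
proof -
  have eq: "complex_of_real (a * f x + b * g x) * cis (- 2 * pi * (x \<bullet> \<xi>))
    = a * (complex_of_real (f x) * cis (- 2 * pi * (x \<bullet> \<xi>))) + b * (complex_of_real (g x) * cis (- 2 * pi * (x \<bullet> \<xi>)))" for x
    by (simp add: algebra_simps)
  show ?thesis
    unfolding fourier_def eq
    using fourier_integrable[OF f, of \<xi>] fourier_integrable[OF g, of \<xi>]
    by (simp add: integral_add integral_mult_right_zero)
qed

lemma fourier_zero: "fourier f 0 = complex_of_real (integral\<^sup>L lborel f)"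
  by (simp add: fourier_def)

lemma gs_fourier:
  assumes s: "s > 0"
  shows "integrable lborel (gs s :: 'a::euclidean_space \<Rightarrow> real)"
    and "fourier (gs s :: 'a \<Rightarrow> real) \<xi> = complex_of_real (s^DIM('a) * gs (1/s) \<xi>)"
proof -
  have "integrable lborel (\<lambda>x::'a. Re (complex_of_real (exp (- pi * (norm x)^2 / s^2)) * cis (-2*pi*(x \<bullet> 0))))"
    using gauss_nd(1)[OF s, of 0] by (rule integrable_Re)
  then show "integrable lborel (gs s :: 'a::euclidean_space \<Rightarrow> real)"
    by (simp add: gs_def[abs_def])
  show "fourier (gs s :: 'a \<Rightarrow> real) \<xi> = complex_of_real (s^DIM('a) * gs (1/s) \<xi>)"
    unfolding fourier_def gs_def gauss_nd(2)[OF s] by (simp add: power_one_over)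
qed

lemma Q_fourier:
  assumes s: "s > 0"
  shows "integrable lborel (Q s :: 'a::euclidean_space \<Rightarrow> real)"
    and "fourier (Q s :: 'a \<Rightarrow> real) \<xi> = complex_of_real (Q s \<xi>)"
proof -
  have s': "1/s > 0" using s by simp
  note i1 = gs_fourier(1)[OF s] and i2 = gs_fourier(1)[OF s']
  have "Q s = (\<lambda>x::'a. 1 * gs s x + s^DIM('a) * gs (1/s) x)"
    by (simp add: Q_def[abs_def])
  moreover have "integrable lborel (\<lambda>x::'a. 1 * gs s x + s^DIM('a) * gs (1/s) x)"
    using i1 i2 by auto
  ultimately show "integrable lborel (Q s :: 'a::euclidean_space \<Rightarrow> real)" by simp
  have "fourier (Q s :: 'a \<Rightarrow> real) \<xi> = fourier (\<lambda>x::'a. 1 * gs s x + s^DIM('a) * gs (1/s) x) \<xi>"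
    by (simp add: Q_def[abs_def])
  also have "\<dots> = complex_of_real 1 * fourier (gs s) \<xi> + complex_of_real (s^DIM('a)) * fourier (gs (1/s)) \<xi>"
    by (rule fourier_lin[OF i1 i2])
  also have "\<dots> = complex_of_real (Q s \<xi>)"
    unfolding gs_fourier(2)[OF s] gs_fourier(2)[OF s'] Q_def using s
    by (simp add: power_one_over field_simps)
  finally show "fourier (Q s :: 'a \<Rightarrow> real) \<xi> = complex_of_real (Q s \<xi>)" .
qed

lemma gs_pos: "0 < gs s x" by (simp add: gs_def)
lemma gs_le1: "gs s x \<le> 1" by (simp add: gs_def)
lemma gs_zero: "gs s (0::'a::euclidean_space) = 1" by (simp add: gs_def)

lemma Q_nonneg: "s > 0 \<Longrightarrow> 0 \<le> Q s x"
  unfolding Q_def using gs_pos[of s x] gs_pos[of "1/s" x] by (simp add: less_imp_le)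

lemma Q_ge_gs: "s > 0 \<Longrightarrow> gs s x \<le> Q s x"
  unfolding Q_def using gs_pos[of "1/s" x] by (simp add: less_imp_le)

lemma Q_le: "s > 0 \<Longrightarrow> Q s (x::'a::euclidean_space) \<le> 1 + s^DIM('a)"
  unfolding Q_def using gs_le1[of s x] gs_le1[of "1/s" x]
  by (simp add: add_mono mult_left_le)

lemma Q_zero: "Q s (0::'a::euclidean_space) = 1 + s^DIM('a)"
  by (simp add: Q_def gs_zero)

lemma Q_integral: "s > 0 \<Longrightarrow> integral\<^sup>L lborel (Q s :: 'a::euclidean_space \<Rightarrow> real) = 1 + s^DIM('a)"
proof -
  assume s: "s > 0"
  have "complex_of_real (integral\<^sup>L lborel (Q s :: 'a \<Rightarrow> real)) = complex_of_real (Q s (0::'a))"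
    using Q_fourier(2)[OF s, of "0::'a"] fourier_zero[of "Q s :: 'a \<Rightarrow> real"] by simp
  then show ?thesis using Q_zero[of s, where 'a='a] of_real_eq_iff by metis
qed

definition aa :: "nat \<Rightarrow> nat \<Rightarrow> real" where "aa d k = (1/2)^((k+1)*(d+1))"
definition ss :: "nat \<Rightarrow> real" where "ss k = 2^(k+1)"
definition FF :: "nat \<Rightarrow> 'a::euclidean_space \<Rightarrow> real" where
  "FF k x = aa DIM('a) k * Q (ss k) x"
definition SS :: "'a::euclidean_space \<Rightarrow> real" where "SS x = (\<Sum>k. FF k x)"

lemma ss_pos: "ss k > 0" by (simp add: ss_def)
lemma aa_pos: "aa d k > 0" by (simp add: aa_def)

lemma aa_ss: "aa d k * ss k ^ d = (1/2)^(k+1)"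
proof -
  have "aa d k = (1/2)^(k+1) * (1/2)^((k+1)*d)"
    by (simp add: aa_def power_add[symmetric] algebra_simps)
  moreover have "ss k ^ d = 2^((k+1)*d)" by (simp only: ss_def power_mult)
  ultimately show ?thesis
    by (simp add: mult.assoc power_one_over)
qed

lemma aa_le: "aa d k \<le> (1/2)^(k+1)"
  unfolding aa_def by (rule power_decreasing) auto

definition BB :: "nat \<Rightarrow> nat \<Rightarrow> real" where "BB d k = aa d k * (1 + ss k ^ d)"

lemma BB_summable: "summable (BB d)"
proof (rule summable_comparison_test)
  show "\<exists>N. \<forall>n\<ge>N. norm (BB d n) \<le> 2 * (1/2)^(n+1)"
  proof (intro exI allI impI)
    fix n :: nat
    have "BB d n = aa d n + (1/2)^(n+1)" by (simp add: BB_def distrib_left aa_ss)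
    then show "norm (BB d n) \<le> 2 * (1/2)^(n+1)"
      using aa_le[of d n] aa_pos[of d n] by simp
  qed
  show "summable (\<lambda>n. 2 * (1/2::real)^(n+1))"
    by (intro summable_mult summable_ignore_initial_segment[where k=1, simplified] summable_geometric) simp
qed

lemma FF_nonneg: "0 \<le> FF k x"
  unfolding FF_def by (intro mult_nonneg_nonneg less_imp_le[OF aa_pos] Q_nonneg[OF ss_pos])

lemma FF_le: "FF k (x::'a::euclidean_space) \<le> BB DIM('a) k"
  unfolding FF_def BB_def using Q_le[OF ss_pos, of k x] aa_pos
  by (simp add: mult_left_mono)

lemma FF_summable: "summable (\<lambda>k. FF k x)"
  by (rule summable_comparison_test[OF _ BB_summable[of "DIM('a)"]]) (intro exI[of _ 0] allI impI, simp add: abs_of_nonneg FF_nonneg FF_le)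

lemma FF_integrable: "integrable lborel (FF k :: 'a::euclidean_space \<Rightarrow> real)"
  unfolding FF_def[abs_def] using Q_fourier(1)[OF ss_pos, where 'a='a] by simp

lemma FF_integral: "integral\<^sup>L lborel (FF k :: 'a::euclidean_space \<Rightarrow> real) = BB DIM('a) k"
  unfolding FF_def[abs_def] BB_def using Q_integral[OF ss_pos, where 'a='a] by simp

lemma FF_fourier: "fourier (FF k :: 'a::euclidean_space \<Rightarrow> real) \<xi> = complex_of_real (FF k \<xi>)"
proof -
  note i = Q_fourier(1)[OF ss_pos, of k]
  have "fourier (FF k :: 'a \<Rightarrow> real) \<xi> = fourier (\<lambda>x. aa DIM('a) k * Q (ss k) x + 0 * Q (ss k) x) \<xi>"
    by (simp add: FF_def[abs_def])
  also have "\<dots> = complex_of_real (aa DIM('a) k) * fourier (Q (ss k)) \<xi> + complex_of_real 0 * fourier (Q (ss k)) \<xi>"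
    by (rule fourier_lin[OF i i])
  finally show ?thesis using Q_fourier(2)[OF ss_pos, where 'a='a] by (simp add: FF_def)
qed

lemma SS_fourier:
  shows "integrable lborel (SS :: 'a::euclidean_space \<Rightarrow> real)"
    and "fourier (SS :: 'a \<Rightarrow> real) \<xi> = complex_of_real (SS \<xi>)"
proof -
  have n': "summable (\<lambda>k. \<integral>x. norm (FF k x :: real) \<partial>(lborel :: 'a measure))"
  proof -
    have "(\<lambda>k. \<integral>x. norm (FF k x :: real) \<partial>(lborel :: 'a measure)) = BB DIM('a)"
      using FF_integral[where 'a='a] by (simp add: FF_nonneg fun_eq_iff)
    then show ?thesis using BB_summable by simp
  qed
  show "integrable lborel (SS :: 'a::euclidean_space \<Rightarrow> real)"
    unfolding SS_def[abs_def]
    by (rule integrable_suminf[OF FF_integrable _ n']) (simp add: FF_nonneg FF_summable)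
  define G where "G = (\<lambda>k (x::'a). complex_of_real (FF k x) * cis (- 2 * pi * (x \<bullet> \<xi>)))"
  have Gi: "integrable lborel (G k)" for k
    unfolding G_def by (rule fourier_integrable[OF FF_integrable])
  have Gn: "norm (G k x) = FF k x" for k x
    by (simp add: G_def norm_mult FF_nonneg)
  have Gsum: "(\<Sum>k. G k x) = complex_of_real (SS x) * cis (- 2 * pi * (x \<bullet> \<xi>))" for x
    unfolding G_def SS_def
    by (simp add: suminf_mult2[symmetric] summable_of_real FF_summable suminf_of_real)
  have "(\<integral>x. (\<Sum>k. G k x) \<partial>lborel) = (\<Sum>k. integral\<^sup>L lborel (G k))"
    apply (rule integral_suminf[OF Gi])
     apply (simp add: Gn; intro AE_I2 FF_summable)
    using n' by (simp add: Gn FF_nonneg)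
  moreover have "integral\<^sup>L lborel (G k) = complex_of_real (FF k \<xi>)" for k
    using FF_fourier[of k \<xi>] by (simp add: fourier_def G_def)
  ultimately show "fourier (SS :: 'a \<Rightarrow> real) \<xi> = complex_of_real (SS \<xi>)"
    unfolding fourier_def Gsum[symmetric]
    by (simp add: SS_def suminf_of_real FF_summable)
qed

lemma pow2_bracket:
  fixes r :: real assumes r: "1 \<le> r"
  shows "\<exists>k::nat. 2^k \<le> r \<and> r \<le> 2^(k+1)"
proof -
  obtain n where n: "r < 2^n" using real_arch_pow[of 2 r] by auto
  define m where "m = (LEAST n. r < (2::real)^n)"
  have m1: "r < 2^m" unfolding m_def by (rule LeastI[of _ n]) (rule n)
  have m0: "m \<noteq> 0" using m1 r by (cases m) auto
  have "\<not> r < 2^(m-1)"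
    unfolding m_def by (rule not_less_Least) (use m0 in \<open>simp add: m_def\<close>)
  then show ?thesis using m1 m0 by (intro exI[of _ "m-1"]) auto
qed

lemma SS_lower:
  fixes x :: "'a::euclidean_space"
  assumes x: "1 \<le> norm x"
  shows "exp (-pi) / 2^(DIM('a)+1) \<le> norm x ^ (DIM('a)+1) * SS x"
proof -
  define d where "d = DIM('a)"
  define r where "r = norm x"
  have r1: "1 \<le> r" using x by (simp add: r_def)
  obtain k where k: "2^k \<le> r" "r \<le> 2^(k+1)" using pow2_bracket[OF r1] by auto
  have "FF k x \<le> SS x"
    using sum_le_suminf[OF FF_summable[of x], of "{k}"] by (simp add: SS_def FF_nonneg)
  have "gs (ss k) x \<ge> exp (-pi)"
  proof -
    have "r^2 \<le> (ss k)^2" using k r1 by (intro power_mono) (auto simp: ss_def)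
    then have "r^2 / (ss k)^2 \<le> 1" using ss_pos[of k] by simp
    then have "pi * (r^2 / (ss k)^2) \<le> pi * 1" using pi_gt_zero by (intro mult_left_mono) auto
    then show ?thesis unfolding gs_def r_def[symmetric] by simp
  qed
  then have "aa d k * exp (-pi) \<le> FF k x"
    using Q_ge_gs[OF ss_pos, of k x] aa_pos[of d k] unfolding FF_def d_def
    by (meson dual_order.trans less_imp_le mult_left_mono)
  have aa_eq: "aa d k = 1 / (ss k)^(d+1)"
    by (simp only: aa_def ss_def power_mult power_one_over)
  have "(ss k)^(d+1) \<le> (2*r)^(d+1)" using k by (intro power_mono) (auto simp: ss_def)
  then have "1 / 2^(d+1) \<le> r^(d+1) * aa d k"
    using r1 ss_pos[of k] unfolding aa_eq
    by (simp add: power_mult_distrib field_simps)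
  then have "exp (-pi) / 2^(d+1) \<le> r^(d+1) * (aa d k * exp (-pi))"
    by (simp add: field_simps)
  also have "\<dots> \<le> r^(d+1) * SS x"
    using \<open>aa d k * exp (-pi) \<le> FF k x\<close> \<open>FF k x \<le> SS x\<close> r1
    by (intro mult_left_mono) auto
  finally show ?thesis by (simp add: d_def r_def)
qed

theorem lemma3:
  shows "\<exists>\<eta>::'a::euclidean_space \<Rightarrow> real.
           \<eta> \<in> A_plus
         \<and> (\<forall>\<xi>. fourier \<eta> \<xi> = complex_of_real (\<eta> \<xi>))
         \<and> \<eta> 0 < 0
         \<and> (\<exists>R. \<forall>x. R \<le> norm x \<longrightarrow> 1 \<le> norm x ^ (DIM('a) + 1) * \<eta> x)"
proof -
  define d where "d = DIM('a)"
  define M where "M = 2 * exp pi * 2^(d+1)"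
  define c where "c = M * SS (0::'a) + 1"
  define \<eta> where "\<eta> = (\<lambda>x::'a. M * SS x + (-c) * Q 1 x)"
  have M0: "M > 0" by (simp add: M_def)
  have S0: "SS (0::'a) \<ge> 0" unfolding SS_def by (rule suminf_nonneg[OF FF_summable FF_nonneg])
  have MS: "0 \<le> M * SS (0::'a)" using M0 S0 by simp
  then have c0: "c > 0" by (simp add: c_def add_nonneg_pos)
  have iS: "integrable lborel (SS :: 'a \<Rightarrow> real)" by (rule SS_fourier(1))
  have iQ: "integrable lborel (Q 1 :: 'a \<Rightarrow> real)" by (rule Q_fourier(1)) simp
  have int: "integrable lborel \<eta>" unfolding \<eta>_def using iS iQ by auto
  have four: "fourier \<eta> \<xi> = complex_of_real (\<eta> \<xi>)" for \<xi>
    unfolding \<eta>_def fourier_lin[OF iS iQ] SS_fourier(2) Q_fourier(2)[of 1, simplified] by simp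
  have Q10: "Q 1 (x::'a) = 2 * exp (- pi * (norm x)^2)" for x by (simp add: Q_def gs_def)
  have neg: "\<eta> 0 < 0" unfolding \<eta>_def using Q10[of 0] MS by (simp add: c_def)
  obtain N where N: "\<And>r. r \<ge> N \<Longrightarrow> r^(d+1) / exp r < 1 / (2*c)"
    using order_tendstoD(2)[OF tendsto_power_div_exp_0[of "d+1"], of "1/(2*c)"] c0
    by (auto simp: eventually_at_top_linorder)
  have tail: "1 \<le> norm x ^ (d + 1) * \<eta> x" if x: "max N 1 \<le> norm x" for x :: 'a
  proof -
    define r where "r = norm x"
    have r1: "1 \<le> r" "N \<le> r" using x by (auto simp: r_def)
    have A: "2 \<le> M * (r^(d+1) * SS x)"
    proof -
      have "exp (-pi) / 2^(d+1) \<le> r^(d+1) * SS x" using SS_lower[of x] r1 by (simp add: r_def d_def)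
      then have "M * (exp (-pi) / 2^(d+1)) \<le> M * (r^(d+1) * SS x)" using M0 by (intro mult_left_mono) auto
      moreover have "M * (exp (-pi) / 2^(d+1)) = 2" by (simp add: M_def exp_minus field_simps)
      ultimately show ?thesis by simp
    qed
    have B: "c * (r^(d+1) * Q 1 x) \<le> 1"
    proof -
      have "exp (- pi * r^2) \<le> exp (- r)"
      proof -
        have "r \<le> r^2" using r1 by (simp add: power2_eq_square)
        also have "r^2 \<le> pi * r^2" using pi_gt3 by (simp add: mult_le_cancel_right1)
        finally show ?thesis by simp
      qed
      then have "r^(d+1) * Q 1 x \<le> 2 * (r^(d+1) / exp r)"
        using r1 by (simp add: Q10 r_def[symmetric] exp_minus field_simps)
      also have "\<dots> \<le> 2 * (1 / (2*c))" using N[OF r1(2)] by simp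
      finally show ?thesis using c0 by (simp add: field_simps)
    qed
    have "norm x ^ (d + 1) * \<eta> x = M * (r^(d+1) * SS x) - c * (r^(d+1) * Q 1 x)"
      by (simp add: \<eta>_def r_def algebra_simps)
    then show ?thesis using A B by simp
  qed
  have nn: "0 \<le> \<eta> x" if "max N 1 \<le> norm x" for x :: 'a
  proof (rule ccontr)
    assume "\<not> 0 \<le> \<eta> x"
    then have "norm x ^ (d + 1) * \<eta> x \<le> 0" by (simp add: mult_nonneg_nonpos)
    then show False using tail[OF that] by simp
  qed
  have ev: "eventually_nonneg \<eta>" unfolding eventually_nonneg_def using nn by blast
  have "\<eta> \<in> A_plus"
    unfolding A_plus_def using int four ev neg
    by (simp add: less_imp_le fourier_zero[symmetric] del: fourier_zero)
  then show ?thesis using four neg tail unfolding d_def by blast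
qed

end
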